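(* The following two identities hold: $$\sum_{k=1}^\infty\frac{(95k^2-84k+16)(9/8)^{k-1}}{k(3k-1)(3k-2)\binom{4k}k}=\frac{2\pi}{\sqrt3}$$ and $$\sum_{k=1}^\infty\frac{(5k^2-4k+1)8^{k}}{k(3k-1)(3k-2)\binom{4k}k}=\frac{3\pi}{2}.$$ *)

theory Defs
  imports "HOL-Analysis.Analysis"
begin

end

theory Submission
  imports Defs
begin

lemma beta_nat:
  fixes a b :: nat
  shows "((\<lambda>x::real. x ^ a * (1 - x) ^ b) has_integral (fact a * fact b / fact (a + b + 1))) {0..1}"
proof -
  have "((\<lambda>t. t powr (real (a+1) - 1) * (1 - t) powr (real (b+1) - 1)) has_integral Beta (real (a+1)) (real (b+1))) {0..1}"
    by (rule has_integral_Beta_real) auto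
  moreover have "Beta (real (a+1)) (real (b+1)) = fact a * fact b / fact (a + b + 1)"
  proof -
    have "Gamma (real (a+1)) = fact a" using Gamma_fact[of a] by (simp add: add.commute)
    moreover have "Gamma (real (b+1)) = fact b" using Gamma_fact[of b] by (simp add: add.commute)
    moreover have "Gamma (real (a+1) + real (b+1)) = fact (a+b+1)" using Gamma_fact[of "a+b+1"] by (simp add: add_ac)
    ultimately show ?thesis by (simp add: Beta_def)
  qed
  ultimately have I: "((\<lambda>t. t powr (real (a+1) - 1) * (1 - t) powr (real (b+1) - 1)) has_integral fact a * fact b / fact (a + b + 1)) {0..1}" by simp
  show ?thesis
    by (rule has_integral_spike_finite[where S="{0,1}", OF _ _ I]) (auto simp: powr_realpow)
qed

lemma series_from_integral:
  fixes h u :: "real \<Rightarrow> real" and f :: "nat \<Rightarrow> real"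
  assumes fi: "\<And>n. ((\<lambda>x. h x * u x ^ n) has_integral f n) {0..1}"
    and hc: "continuous_on {0..1} h" and uc: "continuous_on {0..1} u"
    and ub: "\<And>x. x \<in> {0..1} \<Longrightarrow> 0 \<le> u x \<and> u x \<le> \<rho>" and r1: "\<rho> < 1"
    and I: "((\<lambda>x. h x / (1 - u x)) has_integral I) {0..1}"
  shows "f sums I"
proof -
  define g where "g N x = h x * u x ^ N / (1 - u x)" for N x
  have r0: "0 \<le> \<rho>" using ub[of 0] by auto
  have gi: "(g N has_integral integral {0..1} (g N)) {0..1}" for N
    unfolding g_def
    by (intro integrable_integral integrable_continuous_interval continuous_intros hc uc)
       (use ub r1 in fastforce)
  have ps: "(\<Sum>n<N. f n) = I - integral {0..1} (g N)" for N
  proof -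
    have "((\<lambda>x. \<Sum>n<N. h x * u x ^ n) has_integral (\<Sum>n<N. f n)) {0..1}"
      by (intro has_integral_sum fi) auto
    moreover have "((\<lambda>x. h x / (1 - u x) - g N x) has_integral (I - integral {0..1} (g N))) {0..1}"
      by (intro has_integral_diff I gi)
    moreover have "(\<Sum>n<N. h x * u x ^ n) = h x / (1 - u x) - g N x" if "x \<in> {0..1}" for x
    proof -
      have "u x \<noteq> 1" using ub[OF that] r1 by auto
      then have "(\<Sum>n<N. h x * u x ^ n) = h x * ((1 - u x ^ N) / (1 - u x))"
        by (simp add: sum_distrib_left[symmetric] sum_gp_strict)
      also have "\<dots> = h x / (1 - u x) - g N x" unfolding g_def
        by (simp add: diff_divide_distrib right_diff_distrib)
      finally show ?thesis .
    qed
    ultimately show ?thesis using has_integral_unique has_integral_eq by (metis (no_types, lifting))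
  qed
  obtain M where M: "\<And>x. x \<in> {0..1} \<Longrightarrow> norm (h x) \<le> M"
    using compact_imp_bounded[OF compact_continuous_image[OF hc compact_Icc]]
    unfolding bounded_iff by (metis image_eqI)
  have bnd: "norm (integral {0..1} (g N)) \<le> M / (1 - \<rho>) * \<rho> ^ N" for N
  proof -
    have "norm (integral {0..1} (g N)) \<le> M / (1 - \<rho>) * \<rho> ^ N * Henstock_Kurzweil_Integration.content {0..1::real}"
    proof (rule has_integral_bound_real[where S="{}", OF _ _ gi])
      show "0 \<le> M / (1 - \<rho>) * \<rho> ^ N" using M[of 0] r1 r0 by auto
      show "finite ({}::real set)" by simp
      fix x :: real assume "x \<in> {0..1} - {}"
      then have x: "x \<in> {0..1}" by simp
      have u: "0 \<le> u x" "u x \<le> \<rho>" using ub[OF x] by auto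
      have "norm (g N x) = norm (h x) * u x ^ N / (1 - u x)"
        using u r1 by (simp add: g_def abs_mult)
      also have "\<dots> \<le> M * \<rho> ^ N / (1 - \<rho>)"
        using u r1 M[OF x] by (intro frac_le mult_mono power_mono) auto
      finally show "norm (g N x) \<le> M / (1 - \<rho>) * \<rho> ^ N" by simp
    qed
    then show ?thesis by simp
  qed
  have "(\<lambda>N. integral {0..1} (g N)) \<longlonglongrightarrow> 0"
  proof (rule Lim_null_comparison)
    show "\<forall>\<^sub>F N in sequentially. norm (integral {0..1} (g N)) \<le> M / (1 - \<rho>) * \<rho> ^ N"
      using bnd by simp
    show "(\<lambda>N. M / (1 - \<rho>) * \<rho> ^ N) \<longlonglongrightarrow> 0"
      using r0 r1 by (intro tendsto_mult_right_zero LIMSEQ_power_zero) auto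
  qed
  then have "(\<lambda>N. I - integral {0..1} (g N)) \<longlonglongrightarrow> I - 0" by (intro tendsto_intros)
  then show ?thesis unfolding sums_def ps by simp
qed

lemma fact_exp:
  "(fact (3*n+1) :: real) = (3*real n+1) * fact (3*n)"
  "(fact (3*n+2) :: real) = (3*real n+2) * (3*real n+1) * fact (3*n)"
  "(fact (3*n+3) :: real) = (3*real n+3) * (3*real n+2) * (3*real n+1) * fact (3*n)"
  "(fact (n+2) :: real) = (real n+2) * fact (n+1)"
  "(fact (n+3) :: real) = (real n+3) * (real n+2) * fact (n+1)"
  by (simp_all add: numeral_eq_Suc fact_Suc algebra_simps)

lemma binom_eq:
  "real (4 * Suc n choose Suc n) = fact (4*n+4) / (fact (n+1) * fact (3*n+3))"
proof -
  have "real (4 * Suc n choose Suc n) = fact (4 * Suc n) / (fact (Suc n) * fact (4 * Suc n - Suc n))"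
    by (rule binomial_fact) simp
  moreover have "4 * Suc n - Suc n = 3*n+3" by simp
  moreover have "4 * Suc n = 4*n+4" by simp
  moreover have "Suc n = n+1" by simp
  ultimately show ?thesis by metis
qed

lemma integral_form:
  fixes \<alpha> \<beta> \<gamma> c :: real
  shows "((\<lambda>x. (3*x*(\<alpha>*(1-x)^2 + \<beta>*x*(1-x) + \<gamma>*x^2)) * (c*x*(1-x)^3)^n) has_integral
     c^n * 3 * (\<alpha>*(fact (n+1)*fact (3*n+2)) + \<beta>*(fact (n+2)*fact (3*n+1)) + \<gamma>*(fact (n+3)*fact (3*n))) / fact (4*n+4)) {0..1}"
proof -
  have e1: "n+1 + (3*n+2) + 1 = 4*n+4" "n+2 + (3*n+1) + 1 = 4*n+4" "n+3 + 3*n + 1 = 4*n+4" by simp_all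
  have I: "((\<lambda>x. c^n * 3 * (\<alpha> * (x^(n+1)*(1-x)^(3*n+2)) + \<beta> * (x^(n+2)*(1-x)^(3*n+1)) + \<gamma> * (x^(n+3)*(1-x)^(3*n)))) has_integral
     c^n * 3 * (\<alpha>*(fact (n+1)*fact (3*n+2)/ fact (4*n+4)) + \<beta>*(fact (n+2)*fact (3*n+1)/ fact (4*n+4)) + \<gamma>*(fact (n+3)*fact (3*n)/ fact (4*n+4)))) {0..1}"
    by (intro has_integral_mult_right has_integral_add beta_nat[of "n+1" "3*n+2", unfolded e1(1)] beta_nat[of "n+2" "3*n+1", unfolded e1(2)] beta_nat[of "n+3" "3*n", unfolded e1(3)]) 
  have feq: "(3*x*(\<alpha>*(1-x)^2 + \<beta>*x*(1-x) + \<gamma>*x^2)) * (c*x*(1-x)^3)^n =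
     c^n * 3 * (\<alpha> * (x^(n+1)*(1-x)^(3*n+2)) + \<beta> * (x^(n+2)*(1-x)^(3*n+1)) + \<gamma> * (x^(n+3)*(1-x)^(3*n)))" for x :: real
  proof -
    have "(c*x*(1-x)^3)^n = c^n * x^n * (1-x)^(3*n)" by (simp add: power_mult_distrib power_mult)
    then show ?thesis by (simp add: power_add power2_eq_square power3_eq_cube algebra_simps)
  qed
  have veq: "c^n * 3 * (\<alpha>*(fact (n+1)*fact (3*n+2)/ fact (4*n+4)) + \<beta>*(fact (n+2)*fact (3*n+1)/ fact (4*n+4)) + \<gamma>*(fact (n+3)*fact (3*n)/ fact (4*n+4)))
     = c^n * 3 * (\<alpha>*(fact (n+1)*fact (3*n+2)) + \<beta>*(fact (n+2)*fact (3*n+1)) + \<gamma>*(fact (n+3)*fact (3*n))) / (fact (4*n+4)::real)"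
    by (simp add: field_simps)
  show ?thesis using I by (simp only: feq veq)
qed

lemma value_abs0:
  fixes \<alpha> \<beta> \<gamma> P m a b F :: real
  assumes "\<alpha>*(3*(m+1)-1)*(3*(m+1)-2) + \<beta>*((m+1)+1)*(3*(m+1)-2) + \<gamma>*((m+1)+1)*((m+1)+2) = P"
    and "m \<ge> 0" "a > 0" "b > 0" "F > 0"
  shows "3 * (\<alpha>*(a*((3*m+2)*(3*m+1)*b)) + \<beta>*((m+2)*a*((3*m+1)*b)) + \<gamma>*((m+3)*(m+2)*a*b)) / F
     = P / ((m+1) * (3*(m+1)-1) * (3*(m+1)-2) * (F / (a * ((3*m+3)*(3*m+2)*(3*m+1)*b))))"
proof -
  have pos: "3*m+1 > 0" "3*m+2>0" "m+1>0" using assms by auto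
  have P: "P = \<alpha>*(3*m+2)*(3*m+1)+\<beta>*(m+2)*(3*m+1)+\<gamma>*(m+3)*(m+2)"
    unfolding assms(1)[symmetric] by (simp add: algebra_simps)
  have N: "3 * (\<alpha>*(a*((3*m+2)*(3*m+1)*b)) + \<beta>*((m+2)*a*((3*m+1)*b)) + \<gamma>*((m+3)*(m+2)*a*b))
      = 3*a*b*P" unfolding P by (simp add: algebra_simps)
  have e: "3*(m+1)-1 = 3*m+2" "3*(m+1)-2 = 3*m+1" "3*m+3 = 3*(m+1)" by simp_all
  have R: "P / ((m+1) * (3*(m+1)-1) * (3*(m+1)-2) * (F / (a * ((3*m+3)*(3*m+2)*(3*m+1)*b)))) = 3*a*b*P/F"
  proof -
    have e2: "3*(m+1)*(3*m+2)*(3*m+1) = 3*((m+1)*(3*m+2)*(3*m+1))" by simp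
    have dpos: "(m+1)*(3*m+2)*(3*m+1) > 0" using pos by simp
    have aux: "\<And>d. d > 0 \<Longrightarrow> P/(d*(F/(a*(3*d*b)))) = 3*a*b*P/F" using assms(3-5) by (simp add: field_simps)
    show ?thesis unfolding e e2 by (rule aux[OF dpos])
  qed
  show ?thesis unfolding N R ..
qed

lemma value_abs:
  fixes \<alpha> \<beta> \<gamma> P m a b F :: real
  assumes "\<alpha>*(3*(1+m)-1)*(3*(1+m)-2) + \<beta>*((1+m)+1)*(3*(1+m)-2) + \<gamma>*((1+m)+1)*((1+m)+2) = P"
    and "m \<ge> 0" "a > 0" "b > 0" "F > 0"
  shows "3 * (\<alpha>*(a*((3*m+2)*(3*m+1)*b)) + \<beta>*((m+2)*a*((3*m+1)*b)) + \<gamma>*((m+3)*(m+2)*a*b)) / F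
     = P / ((1+m) * (3*(1+m)-1) * (3*(1+m)-2) * (F / (a * ((3*m+3)*(3*m+2)*(3*m+1)*b))))"
proof -
  have c1: "1+m = m+1" by simp
  show ?thesis using assms unfolding c1 by (rule value_abs0)
qed

lemma value_form:
  fixes \<alpha> \<beta> \<gamma> P :: real
  assumes "\<alpha>*(3*real (Suc n)-1)*(3*real (Suc n)-2) + \<beta>*(real (Suc n)+1)*(3*real (Suc n)-2) + \<gamma>*(real (Suc n)+1)*(real (Suc n)+2) = P"
  shows "3 * (\<alpha>*(fact (n+1)*fact (3*n+2)) + \<beta>*(fact (n+2)*fact (3*n+1)) + \<gamma>*(fact (n+3)*fact (3*n))) / fact (4*n+4)
     = P / (real (Suc n) * (3*real (Suc n)-1) * (3*real (Suc n)-2) * real (4 * Suc n choose Suc n))"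
  apply (subst fact_exp(2), subst fact_exp(1), subst fact_exp(4), subst fact_exp(5), subst binom_eq, subst fact_exp(3))
  apply (simp only: of_nat_Suc)
  apply (rule value_abs)
  using assms by (auto simp: of_nat_Suc)

lemma poly_bound:
  fixes x :: real assumes "0 \<le> x" "x \<le> 1"
  shows "0 \<le> x*(1-x)^3" "x*(1-x)^3 \<le> 27/256"
proof -
  show "0 \<le> x*(1-x)^3" using assms by simp
  have "27/256 - x*(1-x)^3 = ((1-x)-3/4)^2*((1-x)^2+(1-x)/2+3/16)"
    by (simp add: field_simps power2_eq_square power3_eq_cube)
  moreover have "((1-x)-3/4)^2*((1-x)^2+(1-x)/2+3/16) \<ge> 0"
    using assms by (intro mult_nonneg_nonneg) auto
  ultimately show "x*(1-x)^3 \<le> 27/256" by linarith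
qed

lemma I1:
  "((\<lambda>x. (3*x*(39/4*(1-x)^2 + 9/4*x*(1-x) + 1/2*x^2)) / (1 - 9/8*x*(1-x)^3)) has_integral 2*pi/sqrt 3) {0..1::real}"
proof -
  define g where "g x = (3*x*(39/4*(1-x)^2 + 9/4*x*(1-x) + 1/2*x^2)) / (1 - 9/8*x*(1-x)^3)" for x :: real
  define D where "D x = 9*x^4-27*x^3+27*x^2-9*x+8" for x :: real
  define F where "F x = 16/3*ln(D x) + 2 * sqrt 3*arctan(sqrt 3*x)" for x
  have der: "(F has_real_derivative g x) (at x)" if x: "x \<in> {0..1}" for x
  proof -
    have b: "x*(1-x)^3 \<le> 27/256" using poly_bound x by auto
    have D8: "D x = 8*(1 - 9/8*x*(1-x)^3)" unfolding D_def by (simp add: field_simps power2_eq_square power3_eq_cube power4_eq_xxxx)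
    have Dpos: "D x > 0" unfolding D8 using b by simp
    have "(F has_real_derivative (16/3*((36*x^3-81*x^2+54*x-9)/D x) + 2 * sqrt 3*(sqrt 3/(1+(sqrt 3*x)^2)))) (at x)"
    proof -
      have d1: "(D has_real_derivative (36*x^3-81*x^2+54*x-9)) (at x)"
        unfolding D_def by (auto intro!: derivative_eq_intros simp: algebra_simps)
      have d2: "((\<lambda>x. arctan (sqrt 3 * x)) has_real_derivative (sqrt 3 / (1 + (sqrt 3 * x)^2))) (at x)"
        by (auto intro!: derivative_eq_intros simp: field_simps)
      have d3: "((\<lambda>x. ln (D x)) has_real_derivative ((36*x^3-81*x^2+54*x-9) / D x)) (at x)"
        using DERIV_chain2[OF DERIV_ln_divide[OF Dpos] d1] by simp
      show ?thesis unfolding F_def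
        by (intro DERIV_add DERIV_cmult d2 d3)
    qed
    moreover have "16/3*((36*x^3-81*x^2+54*x-9)/D x) + 2 * sqrt 3*(sqrt 3/(1+(sqrt 3*x)^2)) = g x"
    proof -
      have q: "1 + 3*x^2 > 0" by (simp add: add_pos_nonneg)
      have f: "D x = (1+3*x^2)*(3*x^2-9*x+8)" unfolding D_def
        by (simp add: algebra_simps power2_eq_square power3_eq_cube power4_eq_xxxx)
      have r: "3*x^2-9*x+8 \<noteq> 0" using Dpos q f by auto
      have "16/3*((36*x^3-81*x^2+54*x-9)/D x) + 2 * sqrt 3*(sqrt 3/(1+(sqrt 3*x)^2))
          = 16/3*((36*x^3-81*x^2+54*x-9)/D x) + 6/(1+3*x^2)"
        by (simp add: power_mult_distrib)
      also have "6/(1+3*x^2) = 6*(3*x^2-9*x+8)/D x" unfolding f by (rule mult_divide_mult_cancel_right[OF r, symmetric])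
      also have "16/3*((36*x^3-81*x^2+54*x-9)/D x) + 6*(3*x^2-9*x+8)/D x
          = (16/3*(36*x^3-81*x^2+54*x-9) + 6*(3*x^2-9*x+8))/D x"
        by (simp add: add_divide_distrib)
      also have "16/3*(36*x^3-81*x^2+54*x-9) + 6*(3*x^2-9*x+8) = 8*(3*x*(39/4*(1-x)^2 + 9/4*x*(1-x) + 1/2*x^2))"
        by algebra
      also have "8*(3*x*(39/4*(1-x)^2 + 9/4*x*(1-x) + 1/2*x^2)) / D x = (3*x*(39/4*(1-x)^2 + 9/4*x*(1-x) + 1/2*x^2)) / (D x / 8)"
        by simp
      also have "D x / 8 = 1 - 9/8*x*(1-x)^3" using D8 by simp
      finally show ?thesis unfolding g_def .
    qed
    ultimately show ?thesis by simp
  qed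
  have vd: "(F has_vector_derivative g x) (at x within {0..1})" if "x \<in> {0..1}" for x
    using der[OF that] unfolding has_real_derivative_iff_has_vector_derivative
    by (rule has_vector_derivative_at_within)
  have "(g has_integral (F 1 - F 0)) {0..1}"
    by (rule fundamental_theorem_of_calculus) (simp, rule vd)
  moreover have "F 1 - F 0 = 2*pi/sqrt 3"
  proof -
    have "arctan (tan (pi/3)) = pi/3" by (rule arctan_tan) (use pi_gt_zero in linarith)+
    then have a: "arctan (sqrt 3) = pi/3" unfolding tan_60 .
    have "F 1 - F 0 = 2 * sqrt 3*(pi/3)" unfolding F_def D_def by (simp add: a)
    also have "\<dots> = 2*pi/sqrt 3" by (simp add: field_simps)
    finally show ?thesis .
  qed
  ultimately show ?thesis unfolding g_def by simp
qed

lemma ftc_real: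
  fixes F g :: "real \<Rightarrow> real"
  assumes "a \<le> b" "\<And>x. x \<in> {a..b} \<Longrightarrow> (F has_real_derivative g x) (at x)"
  shows "(g has_integral (F b - F a)) {a..b}"
proof -
  have vd: "(F has_vector_derivative g x) (at x within {a..b})" if "x \<in> {a..b}" for x
    using assms(2)[OF that] unfolding has_real_derivative_iff_has_vector_derivative
    by (rule has_vector_derivative_at_within)
  show ?thesis by (rule fundamental_theorem_of_calculus) (rule assms(1), rule vd)
qed

lemma arctan_ratio_deriv:
  fixes A B :: "real \<Rightarrow> real"
  assumes "A x \<noteq> 0" "(A has_real_derivative a') (at x)" "(B has_real_derivative b') (at x)"
  shows "((\<lambda>x. arctan (B x / A x)) has_real_derivative ((b' * A x - B x * a')/(A x^2 + B x^2))) (at x)"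
proof -
  have "((\<lambda>x. arctan (B x / A x)) has_real_derivative
      (inverse (1 + (B x / A x)^2) * ((b' * A x - B x * a') / (A x * A x)))) (at x)"
    by (rule DERIV_chain2[OF DERIV_arctan DERIV_divide[OF assms(3) assms(2) assms(1)]])
  moreover have "inverse (1 + (B x / A x)^2) * ((b' * A x - B x * a') / (A x * A x))
      = (b' * A x - B x * a')/(A x^2 + B x^2)"
  proof -
    have p: "A x^2 + B x^2 > 0" using assms(1) by (simp add: add_pos_nonneg)
    have "1 + (B x / A x)^2 = (A x^2 + B x^2) / A x^2" using assms(1) by (simp add: field_simps)
    then have i: "inverse (1 + (B x / A x)^2) = A x^2 / (A x^2 + B x^2)" by simp
    have "A x^2 / (A x^2 + B x^2) * ((b' * A x - B x * a') / (A x * A x)) = 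
          (A x * A x) / (A x * A x) * ((b' * A x - B x * a') / (A x^2 + B x^2))"
      unfolding power2_eq_square by (simp add: divide_simps mult.commute)
    also have "\<dots> = (b' * A x - B x * a') / (A x^2 + B x^2)" using assms(1) by simp
    finally show ?thesis unfolding i .
  qed
  ultimately show ?thesis by simp
qed

lemma I2:
  "((\<lambda>x. (3*x*(4*(1-x)^2 + 1*x*(1-x) + 1*x^2)) / (1 - 8*x*(1-x)^3)) has_integral 3*pi/2) {0..1::real}"
proof -
  define g where "g x = (3*x*(4*(1-x)^2 + 1*x*(1-x) + 1*x^2)) / (1 - 8*x*(1-x)^3)" for x :: real
  define D where "D x = 1 - 8*x*(1-x)^3" for x :: real
  define A where "A x = 2*x^2-4*x+1" for x :: real
  define B where "B x = 2*x^2-2*x" for x :: real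
  define G where "G x = 3/8*ln (D x) - 3/2*arctan (B x / A x)" for x
  define H where "H x = 3/8*ln (D x) + 3/2*arctan (A x / B x)" for x
  have DAB: "D x = A x^2 + B x^2" for x
    unfolding D_def A_def B_def by (simp add: algebra_simps power2_eq_square power3_eq_cube)
  have Dpos: "D x > 0" if "x \<in> {0..1}" for x
    using poly_bound[of x] that unfolding D_def by auto
  have dD: "(D has_real_derivative (32*x^3-72*x^2+48*x-8)) (at x)" for x
    unfolding D_def by (auto intro!: derivative_eq_intros simp: algebra_simps power2_eq_square power3_eq_cube)
  have dA: "(A has_real_derivative (4*x-4)) (at x)" for x
    unfolding A_def by (auto intro!: derivative_eq_intros simp: algebra_simps)
  have dB: "(B has_real_derivative (4*x-2)) (at x)" for x
    unfolding B_def by (auto intro!: derivative_eq_intros simp: algebra_simps)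
  have dlnD: "((\<lambda>x. ln (D x)) has_real_derivative ((32*x^3-72*x^2+48*x-8) / D x)) (at x)"
    if "x \<in> {0..1}" for x
    using DERIV_chain2[OF DERIV_ln_divide[OF Dpos[OF that]] dD] by simp
  have gsplit: "g x = 3/8*((32*x^3-72*x^2+48*x-8) / D x) + 3/2*((4*x^2-4*x+2) / D x)" if "x \<in> {0..1}" for x
  proof -
    have "3/8*((32*x^3-72*x^2+48*x-8) / D x) + 3/2*((4*x^2-4*x+2) / D x)
        = (3/8*(32*x^3-72*x^2+48*x-8) + 3/2*(4*x^2-4*x+2)) / D x"
      by (simp add: add_divide_distrib)
    also have "3/8*(32*x^3-72*x^2+48*x-8) + 3/2*(4*x^2-4*x+2) = 3*x*(4*(1-x)^2 + 1*x*(1-x) + 1*x^2)"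
      by algebra
    finally show ?thesis unfolding g_def D_def by simp
  qed
  have E1: "(4*x-2) * A x - B x * (4*x-4) = -(4*x^2-4*x+2)" for x
    unfolding A_def B_def by algebra
  have E2: "(4*x-4) * B x - A x * (4*x-2) = (4*x^2-4*x+2)" for x
    unfolding A_def B_def by algebra
  have derG: "(G has_real_derivative g x) (at x)" if "x \<in> {0..1}" "A x \<noteq> 0" for x
  proof -
    have "(G has_real_derivative (3/8*((32*x^3-72*x^2+48*x-8) / D x) - 3/2*(((4*x-2) * A x - B x * (4*x-4))/(A x^2 + B x^2)))) (at x)"
      unfolding G_def
      by (intro DERIV_diff DERIV_cmult dlnD[OF that(1)] arctan_ratio_deriv that(2) dA dB)
    then show ?thesis by (rule DERIV_cong) (simp only: E1 DAB[symmetric] gsplit[OF that(1)] minus_divide_left[symmetric] mult_minus_right diff_minus_eq_add)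
  qed
  have derH: "(H has_real_derivative g x) (at x)" if "x \<in> {0..1}" "B x \<noteq> 0" for x
  proof -
    have "(H has_real_derivative (3/8*((32*x^3-72*x^2+48*x-8) / D x) + 3/2*(((4*x-4) * B x - A x * (4*x-2))/(B x^2 + A x^2)))) (at x)"
      unfolding H_def
      by (intro DERIV_add DERIV_cmult dlnD[OF that(1)] arctan_ratio_deriv that(2) dA dB)
    then show ?thesis unfolding E2 add.commute[of "B x^2"] DAB[symmetric] gsplit[OF that(1)] by simp
  qed
  have i1: "(g has_integral (G (1/4) - G 0)) {0..1/4}"
  proof (rule ftc_real)
    fix x :: real assume x: "x \<in> {0..1/4}"
    have "(1-x)^2 \<ge> (3/4)^2" using x by (intro power_mono) auto
    then have "A x > 0" unfolding A_def by (simp add: algebra_simps power2_eq_square)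
    then show "(G has_real_derivative g x) (at x)" using x by (intro derG) auto
  qed simp
  have i2: "(g has_integral (H (1/2) - H (1/4))) {1/4..1/2}"
  proof (rule ftc_real)
    fix x :: real assume x: "x \<in> {1/4..1/2}"
    have "B x = 2*x*(x-1)" unfolding B_def by (simp add: algebra_simps power2_eq_square)
    moreover have "2*x*(x-1) < 0" using x by (intro mult_pos_neg) auto
    ultimately have "B x \<noteq> 0" by auto
    then show "(H has_real_derivative g x) (at x)" using x by (intro derH) auto
  qed simp
  have i3: "(g has_integral (G 1 - G (1/2))) {1/2..1}"
  proof (rule ftc_real)
    fix x :: real assume x: "x \<in> {1/2..1}"
    have "(1-x)^2 \<le> (1/2)^2" using x by (intro power_mono) auto
    then have "A x < 0" unfolding A_def by (simp add: algebra_simps power2_eq_square)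
    then show "(G has_real_derivative g x) (at x)" using x by (intro derG) auto
  qed simp
  have "(g has_integral ((G (1/4) - G 0) + (H (1/2) - H (1/4)) + (G 1 - G (1/2)))) {0..1}"
    by (rule has_integral_combine[OF _ _ has_integral_combine[OF _ _ i1 i2] i3]) auto
  moreover have "(G (1/4) - G 0) + (H (1/2) - H (1/4)) + (G 1 - G (1/2)) = 3*pi/2"
  proof -
    have inv: "arctan (1/3) = pi/2 - arctan 3" using arctan_inverse[of 3] by simp
    have "(G (1/4) - G 0) + (H (1/2) - H (1/4)) + (G 1 - G (1/2)) = 3/2*arctan 3 + 3/2*(pi/4) + 3/2*arctan (1/3) + 3/2*(pi/4)"
      unfolding G_def H_def A_def B_def D_def by (simp add: arctan_one arctan_minus power2_eq_square)
    also have "\<dots> = 3*pi/2" unfolding inv by (simp add: field_simps)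
    finally show ?thesis .
  qed
  ultimately show ?thesis unfolding g_def by simp
qed

lemma series1:
  "(\<lambda>n. let k = real (Suc n) in
            (95 * k^2 - 84 * k + 16) * (9/8) ^ n /
            (k * (3*k - 1) * (3*k - 2) * real (4 * Suc n choose Suc n)))
           sums (2 * pi / sqrt 3)"
proof (rule series_from_integral[where h="\<lambda>x. 3*x*(39/4*(1-x)^2 + 9/4*x*(1-x) + 1/2*x^2)"
      and u="\<lambda>x. 9/8*x*(1-x)^3" and \<rho>="9/8*(27/256)"])
  fix n
  let ?k = "real (Suc n)"
  have P: "39/4*(3*?k-1)*(3*?k-2) + 9/4*(?k+1)*(3*?k-2) + 1/2*(?k+1)*(?k+2) = 95 * ?k^2 - 84 * ?k + 16"
    by algebra
  have "((\<lambda>x::real. 3*x*(39/4*(1-x)^2 + 9/4*x*(1-x) + 1/2*x^2) * (9/8*x*(1-x)^3)^n) has_integral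
     (9/8)^n * (3 * (39/4*(fact (n+1)*fact (3*n+2)) + 9/4*(fact (n+2)*fact (3*n+1)) + 1/2*(fact (n+3)*fact (3*n))) / fact (4*n+4))) {0..1}"
    using integral_form[of "39/4" "9/4" "1/2" "9/8" n] by (simp only: mult.assoc times_divide_eq_right)
  also have "(9/8)^n * (3 * (39/4*(fact (n+1)*fact (3*n+2)) + 9/4*(fact (n+2)*fact (3*n+1)) + 1/2*(fact (n+3)*fact (3*n))) / fact (4*n+4))
     = (let k = real (Suc n) in (95 * k^2 - 84 * k + 16) * (9/8) ^ n / (k * (3*k - 1) * (3*k - 2) * real (4 * Suc n choose Suc n)))"
    unfolding value_form[OF P] Let_def by simp
  finally show "((\<lambda>x. 3*x*(39/4*(1-x)^2 + 9/4*x*(1-x) + 1/2*x^2) * (9/8*x*(1-x)^3)^n) has_integral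
     (let k = real (Suc n) in (95 * k^2 - 84 * k + 16) * (9/8) ^ n / (k * (3*k - 1) * (3*k - 2) * real (4 * Suc n choose Suc n)))) {0..1}" .
next
  show "continuous_on {0..1} (\<lambda>x::real. 3*x*(39/4*(1-x)^2 + 9/4*x*(1-x) + 1/2*x^2))"
    by (intro continuous_intros)
  show "continuous_on {0..1} (\<lambda>x::real. 9/8*x*(1-x)^3)"
    by (intro continuous_intros)
  show "0 \<le> 9/8*x*(1-x)^3 \<and> 9/8*x*(1-x)^3 \<le> 9/8*(27/256::real)" if "x \<in> {0..1}" for x :: real
    using poly_bound[of x] that by auto
  show "9/8*(27/256) < (1::real)" by simp
  show "((\<lambda>x. 3*x*(39/4*(1-x)^2 + 9/4*x*(1-x) + 1/2*x^2) / (1 - 9/8*x*(1-x)^3)) has_integral (2 * pi / sqrt 3)) {0..1}"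
    using I1 by simp
qed

lemma series2:
  "(\<lambda>n. let k = real (Suc n) in
            (5 * k^2 - 4 * k + 1) * 8 ^ Suc n /
            (k * (3*k - 1) * (3*k - 2) * real (4 * Suc n choose Suc n)))
           sums (3 * pi / 2)"
proof (rule series_from_integral[where h="\<lambda>x. 3*x*(4*(1-x)^2 + 1*x*(1-x) + 1*x^2)"
      and u="\<lambda>x. 8*x*(1-x)^3" and \<rho>="8*(27/256)"])
  fix n
  let ?k = "real (Suc n)"
  have P: "4*(3*?k-1)*(3*?k-2) + 1*(?k+1)*(3*?k-2) + 1*(?k+1)*(?k+2) = 8*(5 * ?k^2 - 4 * ?k + 1)"
    by algebra
  have "((\<lambda>x::real. 3*x*(4*(1-x)^2 + 1*x*(1-x) + 1*x^2) * (8*x*(1-x)^3)^n) has_integral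
     8^n * (3 * (4*(fact (n+1)*fact (3*n+2)) + 1*(fact (n+2)*fact (3*n+1)) + 1*(fact (n+3)*fact (3*n))) / fact (4*n+4))) {0..1}"
    using integral_form[of "4" "1" "1" "8" n] by (simp only: mult.assoc times_divide_eq_right)
  also have "8^n * (3 * (4*(fact (n+1)*fact (3*n+2)) + 1*(fact (n+2)*fact (3*n+1)) + 1*(fact (n+3)*fact (3*n))) / fact (4*n+4))
     = (let k = real (Suc n) in (5 * k^2 - 4 * k + 1) * 8 ^ Suc n / (k * (3*k - 1) * (3*k - 2) * real (4 * Suc n choose Suc n)))"
    unfolding value_form[OF P] Let_def by simp
  finally show "((\<lambda>x. 3*x*(4*(1-x)^2 + 1*x*(1-x) + 1*x^2) * (8*x*(1-x)^3)^n) has_integral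
     (let k = real (Suc n) in (5 * k^2 - 4 * k + 1) * 8 ^ Suc n / (k * (3*k - 1) * (3*k - 2) * real (4 * Suc n choose Suc n)))) {0..1}" .
next
  show "continuous_on {0..1} (\<lambda>x::real. 3*x*(4*(1-x)^2 + 1*x*(1-x) + 1*x^2))"
    by (intro continuous_intros)
  show "continuous_on {0..1} (\<lambda>x::real. 8*x*(1-x)^3)"
    by (intro continuous_intros)
  show "0 \<le> 8*x*(1-x)^3 \<and> 8*x*(1-x)^3 \<le> 8*(27/256::real)" if "x \<in> {0..1}" for x :: real
    using poly_bound[of x] that by auto
  show "8*(27/256) < (1::real)" by simp
  show "((\<lambda>x. 3*x*(4*(1-x)^2 + 1*x*(1-x) + 1*x^2) / (1 - 8*x*(1-x)^3)) has_integral (3 * pi / 2)) {0..1}"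
    using I2 by simp
qed

theorem theorem1p1:
  shows "(\<lambda>n. let k = real (Suc n) in
            (95 * k^2 - 84 * k + 16) * (9/8) ^ n /
            (k * (3*k - 1) * (3*k - 2) * real (4 * Suc n choose Suc n)))
           sums (2 * pi / sqrt 3) \<and>
         (\<lambda>n. let k = real (Suc n) in
            (5 * k^2 - 4 * k + 1) * 8 ^ Suc n /
            (k * (3*k - 1) * (3*k - 2) * real (4 * Suc n choose Suc n)))
           sums (3 * pi / 2)"
  using series1 series2 by blast

end
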